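(* Let $\ell,k$ be positive integers with $k\ge 2$, and let $G_{\ell,k}$ be the graph constructed as follows: take disjoint paths $x_{0,r}x_{1,r}\cdots x_{\ell,r}$ for $1\le r\le k$, identify $x_{0,1},\dots,x_{0,k}$ into a single vertex $u$, identify $x_{\ell,1},\dots,x_{\ell,k}$ into a single vertex $v$, and add the edge $uv$. For vertices $a,b\ne u$ write $a\sim_u b$ if there is a graph automorphism $\pi$ of $G_{\ell,k}$ with $\pi(u)=u$ and $\pi(a)=b$. Then the equivalence classes of $\sim_u$ are $\{x_{1,r}\}_{r=1}^k,\{x_{2,r}\}_{r=1}^k,\dots,\{x_{\ell-1,r}\}_{r=1}^k$ and $\{v\}$.
   Context: A graph automorphism is a bijection of the vertex set preserving adjacency and non-adjacency. *)

theory Defs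
  imports Main
begin

text \<open>Vertices of G_{l,k}: the identified endpoints u (GU) and v (GV), and the
  internal path vertices x_{i,r} (GX i r), 1 <= i <= l-1, 1 <= r <= k.\<close>
datatype gvert = GU | GV | GX nat nat

definition pvert :: "nat \<Rightarrow> nat \<Rightarrow> nat \<Rightarrow> gvert" where
  "pvert l i r = (if i = 0 then GU else if i = l then GV else GX i r)"

definition G_verts :: "nat \<Rightarrow> nat \<Rightarrow> gvert set" where
  "G_verts l k = {pvert l i r | i r. i \<le> l \<and> 1 \<le> r \<and> r \<le> k}"

definition G_edges :: "nat \<Rightarrow> nat \<Rightarrow> gvert set set" where
  "G_edges l k = {{GU, GV}} \<union>
     {{pvert l i r, pvert l (Suc i) r} | i r. i < l \<and> 1 \<le> r \<and> r \<le> k}"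

definition G_adj :: "nat \<Rightarrow> nat \<Rightarrow> gvert \<Rightarrow> gvert \<Rightarrow> bool" where
  "G_adj l k a b \<longleftrightarrow> {a, b} \<in> G_edges l k"

definition G_aut :: "nat \<Rightarrow> nat \<Rightarrow> (gvert \<Rightarrow> gvert) \<Rightarrow> bool" where
  "G_aut l k \<pi> \<longleftrightarrow> bij_betw \<pi> (G_verts l k) (G_verts l k) \<and>
     (\<forall>a\<in>G_verts l k. \<forall>b\<in>G_verts l k. G_adj l k a b \<longleftrightarrow> G_adj l k (\<pi> a) (\<pi> b))"

definition sim_u :: "nat \<Rightarrow> nat \<Rightarrow> gvert rel" where
  "sim_u l k = {(a, b). a \<in> G_verts l k - {GU} \<and> b \<in> G_verts l k - {GU} \<and>
     (\<exists>\<pi>. G_aut l k \<pi> \<and> \<pi> GU = GU \<and> \<pi> a = b)}"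

end

theory Submission
  imports Defs
begin

lemma pvert_GU[simp]: "pvert l i r = GU \<longleftrightarrow> i = 0"
  by (simp add: pvert_def)
lemma pvert_0[simp]: "pvert l 0 r = GU"
  by (simp add: pvert_def)
lemma pvert_GV[simp]: "pvert l i r = GV \<longleftrightarrow> i \<noteq> 0 \<and> i = l"
  by (simp add: pvert_def)
lemma pvert_GX[simp]: "pvert l i r = GX j s \<longleftrightarrow> i \<noteq> 0 \<and> i \<noteq> l \<and> j = i \<and> s = r"
  by (auto simp add: pvert_def)

lemma pvert_in: "i \<le> l \<Longrightarrow> 1 \<le> r \<Longrightarrow> r \<le> k \<Longrightarrow> pvert l i r \<in> G_verts l k"
  by (auto simp: G_verts_def)

lemma verts_eq: assumes "1 \<le> l" "1 \<le> k" shows "G_verts l k =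
   {GU, GV} \<union> {GX i r | i r. 1 \<le> i \<and> i < l \<and> 1 \<le> r \<and> r \<le> k}"
proof (rule set_eqI, rule iffI)
  fix x assume "x \<in> G_verts l k"
  then show "x \<in> {GU, GV} \<union> {GX i r | i r. 1 \<le> i \<and> i < l \<and> 1 \<le> r \<and> r \<le> k}"
    using assms unfolding G_verts_def pvert_def by (auto split: if_splits)
next
  fix x assume h0: "x \<in> {GU, GV} \<union> {GX i r | i r. 1 \<le> i \<and> i < l \<and> 1 \<le> r \<and> r \<le> k}"
  note h = assms h0
  have "GU \<in> G_verts l k" using pvert_in[of 0 l 1 k] h by (simp add: pvert_def)
  moreover have "GV \<in> G_verts l k" using pvert_in[of l l 1 k] h by (simp add: pvert_def)
  moreover have "GX i r = pvert l i r" if "1 \<le> i" "i < l" for i r using that by (simp add: pvert_def)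
  ultimately show "x \<in> G_verts l k" using h
    by (auto intro!: pvert_in simp del: pvert_GU pvert_GV pvert_GX)
qed

lemma adj_sym: "G_adj l k a b = G_adj l k b a"
  by (simp add: G_adj_def insert_commute)

lemma adj_iff: "G_adj l k a b \<longleftrightarrow> {a,b} = {GU,GV} \<or>
   (\<exists>i r. i < l \<and> 1 \<le> r \<and> r \<le> k \<and> {a,b} = {pvert l i r, pvert l (Suc i) r})"
  unfolding G_adj_def G_edges_def by blast

lemma adj_GU: "1 \<le> l \<Longrightarrow> G_adj l k GU b \<longleftrightarrow> b = GV \<or> (\<exists>r. 1 \<le> r \<and> r \<le> k \<and> b = pvert l 1 r)"
proof
  assume "G_adj l k GU b"
  then show "b = GV \<or> (\<exists>r. 1 \<le> r \<and> r \<le> k \<and> b = pvert l 1 r)"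
    unfolding adj_iff doubleton_eq_iff
    by (metis One_nat_def pvert_GU nat.distinct(1))
next
  assume a: "1 \<le> l" "b = GV \<or> (\<exists>r. 1 \<le> r \<and> r \<le> k \<and> b = pvert l 1 r)"
  then show "G_adj l k GU b"
  proof (cases "b = GV")
    case False
    then obtain r where "1 \<le> r" "r \<le> k" "b = pvert l 1 r" using a by auto
    then show ?thesis unfolding adj_iff
      by (metis One_nat_def a(1) le_simps(3) pvert_GU)
  qed (auto simp: adj_iff)
qed

lemma adj_GX: "1 \<le> i \<Longrightarrow> i < l \<Longrightarrow> 1 \<le> r \<Longrightarrow> r \<le> k \<Longrightarrow>
   G_adj l k (GX i r) b \<longleftrightarrow> b = pvert l (i-1) r \<or> b = pvert l (Suc i) r"
proof
  assume h: "1 \<le> i" "i < l" "1 \<le> r" "r \<le> k" and "G_adj l k (GX i r) b"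
  then obtain j s where js: "{GX i r, b} = {pvert l j s, pvert l (Suc j) s}"
    unfolding adj_iff doubleton_eq_iff by auto
  then show "b = pvert l (i-1) r \<or> b = pvert l (Suc i) r"
    unfolding doubleton_eq_iff
    by (metis diff_Suc_1 pvert_GX)
next
  assume h: "1 \<le> i" "i < l" "1 \<le> r" "r \<le> k" 
  assume "b = pvert l (i-1) r \<or> b = pvert l (Suc i) r"
  then show "G_adj l k (GX i r) b"
  proof
    assume b: "b = pvert l (i-1) r"
    have "{GX i r, b} = {pvert l (i-1) r, pvert l (Suc (i-1)) r}"
      using h b by (auto simp: pvert_def)
    then show ?thesis unfolding adj_iff using h by (metis less_imp_diff_less)
  next
    assume b: "b = pvert l (Suc i) r"
    have "{GX i r, b} = {pvert l i r, pvert l (Suc i) r}"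
      using h b by (auto simp: pvert_def)
    then show ?thesis unfolding adj_iff using h by metis
  qed
qed

lemma aut_inj: "G_aut l k \<pi> \<Longrightarrow> inj_on \<pi> (G_verts l k)"
  by (simp add: G_aut_def bij_betw_def)
lemma aut_in: "G_aut l k \<pi> \<Longrightarrow> a \<in> G_verts l k \<Longrightarrow> \<pi> a \<in> G_verts l k"
  by (auto simp add: G_aut_def bij_betw_def)
lemma aut_adj: "G_aut l k \<pi> \<Longrightarrow> a \<in> G_verts l k \<Longrightarrow> b \<in> G_verts l k \<Longrightarrow>
   G_adj l k a b \<Longrightarrow> G_adj l k (\<pi> a) (\<pi> b)"
  by (auto simp add: G_aut_def)

lemma aut_GV:
  assumes A: "G_aut l k \<pi>" and U: "\<pi> GU = GU" and l: "1 \<le> l" and k: "2 \<le> k"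
  shows "\<pi> GV = GV"
proof -
  let ?V = "G_verts l k"
  have V: "?V = {GU, GV} \<union> {GX i r | i r. 1 \<le> i \<and> i < l \<and> 1 \<le> r \<and> r \<le> k}"
    using verts_eq l k by simp
  have GUV: "GU \<in> ?V" "GV \<in> ?V" using V by auto
  have inj: "inj_on \<pi> ?V" using aut_inj[OF A] .
  have "G_adj l k GU GV" using adj_GU l by simp
  then have "G_adj l k GU (\<pi> GV)" using aut_adj[OF A GUV] U by simp
  then obtain r where r: "\<pi> GV = GV \<or> (1 \<le> r \<and> r \<le> k \<and> \<pi> GV = pvert l 1 r)"
    using adj_GU l by blast
  show ?thesis
  proof (cases "\<pi> GV = GV")
    case False
    with r have r: "1 \<le> r" "r \<le> k" "\<pi> GV = pvert l 1 r" by auto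
    have l2: "l \<noteq> 1" using r False by (auto simp: pvert_def)
    with l have l2: "2 \<le> l" by simp
    have pGV: "\<pi> GV = GX 1 r" using r l2 by (simp add: pvert_def)
    have claim: "\<pi> (GX (l-1) s) = pvert l 2 r \<and> GX (l-1) s \<in> ?V" if s: "1 \<le> s" "s \<le> k" for s
    proof -
      have inV: "GX (l-1) s \<in> ?V" using V s l2 by auto
      have e: "GV = pvert l (Suc (l-1)) s" using l2 by (simp add: pvert_def)
      have "G_adj l k (GX (l-1) s) GV" using adj_GX[of "l-1" l s k GV] s l2 e by auto
      then have "G_adj l k GV (GX (l-1) s)" using adj_sym by metis
      then have "G_adj l k (GX 1 r) (\<pi> (GX (l-1) s))" using aut_adj[OF A GUV(2) inV] pGV by simp
      then have "\<pi> (GX (l-1) s) = GU \<or> \<pi> (GX (l-1) s) = pvert l 2 r"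
        using adj_GX[of 1 l r k] l2 r by (simp add: numeral_2_eq_2)
      moreover have "\<pi> (GX (l-1) s) \<noteq> GU"
        using inj_onD[OF inj _ inV GUV(1)] U by auto
      ultimately show ?thesis using inV by auto
    qed
    have c1: "\<pi> (GX (l-1) 1) = pvert l 2 r" "GX (l-1) 1 \<in> ?V" using claim[of 1] k by auto
    have c2: "\<pi> (GX (l-1) 2) = pvert l 2 r" "GX (l-1) 2 \<in> ?V" using claim[of 2] k by auto
    have "\<pi> (GX (l-1) 1) = \<pi> (GX (l-1) 2)" using c1 c2 by simp
    then have "GX (l-1) 1 = GX (l-1) 2" using inj_onD[OF inj _ c1(2) c2(2)] by blast
    then show ?thesis by simp
  qed
qed

lemma aut_level:
  assumes A: "G_aut l k \<pi>" and U: "\<pi> GU = GU" and l: "1 \<le> l" and k: "2 \<le> k"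
  shows "1 \<le> i \<Longrightarrow> i < l \<Longrightarrow> 1 \<le> r \<Longrightarrow> r \<le> k \<Longrightarrow>
     \<exists>r'. 1 \<le> r' \<and> r' \<le> k \<and> \<pi> (GX i r) = GX i r' \<and> \<pi> (pvert l (i-1) r) = pvert l (i-1) r'"
proof (induction i arbitrary: r)
  case 0
  then show ?case by simp
next
  case (Suc j)
  let ?V = "G_verts l k"
  have V: "?V = {GU, GV} \<union> {GX i r | i r. 1 \<le> i \<and> i < l \<and> 1 \<le> r \<and> r \<le> k}"
    using verts_eq l k by simp
  have GUV: "GU \<in> ?V" "GV \<in> ?V" using V by auto
  have inj: "inj_on \<pi> ?V" using aut_inj[OF A] .
  have V2: "\<pi> GV = GV" using aut_GV[OF A U l k] .
  have inX: "GX (Suc j) r \<in> ?V" using V Suc.prems by auto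
  have nGV: "\<pi> (GX (Suc j) r) \<noteq> GV"
    using inj_onD[OF inj _ inX GUV(2)] V2 by auto
  show ?case
  proof (cases "j = 0")
    case True
    have "G_adj l k (GX 1 r) GU" using adj_GX[of 1 l r k GU] Suc.prems True by simp
    then have "G_adj l k GU (GX 1 r)" using adj_sym by metis
    then have "G_adj l k GU (\<pi> (GX 1 r))" using aut_adj[OF A GUV(1)] inX True U by simp
    then obtain r' where "1 \<le> r'" "r' \<le> k" "\<pi> (GX 1 r) = pvert l 1 r'"
      using adj_GU[OF l] nGV True by auto
    moreover have "pvert l 1 r' = GX 1 r'" using Suc.prems True by (simp add: pvert_def)
    ultimately show ?thesis using True U by auto
  next
    case False
    then obtain r' where r': "1 \<le> r'" "r' \<le> k" "\<pi> (GX j r) = GX j r'"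
      "\<pi> (pvert l (j-1) r) = pvert l (j-1) r'"
      using Suc.IH[of r] Suc.prems by auto
    have inj0: "GX j r \<in> ?V" using V Suc.prems False by auto
    have inP: "pvert l (j-1) r \<in> ?V" using pvert_in Suc.prems by simp
    have e: "GX (Suc j) r = pvert l (Suc j) r" using Suc.prems by (simp add: pvert_def)
    have "G_adj l k (GX j r) (GX (Suc j) r)" using adj_GX[of j l r k] Suc.prems False e by simp
    then have "G_adj l k (GX j r') (\<pi> (GX (Suc j) r))" using aut_adj[OF A inj0 inX] r' by simp
    then have "\<pi> (GX (Suc j) r) = pvert l (j-1) r' \<or> \<pi> (GX (Suc j) r) = pvert l (Suc j) r'"
      using adj_GX[of j l r' k] Suc.prems False r' by simp
    moreover have "\<pi> (GX (Suc j) r) \<noteq> pvert l (j-1) r'"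
    proof
      assume "\<pi> (GX (Suc j) r) = pvert l (j-1) r'"
      then have "\<pi> (GX (Suc j) r) = \<pi> (pvert l (j-1) r)" using r' by simp
      then have "GX (Suc j) r = pvert l (j-1) r" using inj_onD[OF inj _ inX inP] by blast
      then show False using False by (simp add: pvert_def split: if_splits)
    qed
    moreover have "pvert l (Suc j) r' = GX (Suc j) r'" using Suc.prems by (simp add: pvert_def)
    moreover have p: "pvert l j r' = GX j r'" "pvert l j r = GX j r" using Suc.prems False by (auto simp: pvert_def)
    have "\<pi> (pvert l (Suc j - 1) r) = pvert l (Suc j - 1) r'"
      by (simp only: diff_Suc_1 p r'(3))
    ultimately show ?thesis using r' by auto
  qed
qed

definition sw :: "nat \<Rightarrow> nat \<Rightarrow> nat \<Rightarrow> nat" where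
  "sw a b x = (if x = a then b else if x = b then a else x)"

fun swv :: "nat \<Rightarrow> nat \<Rightarrow> gvert \<Rightarrow> gvert" where
  "swv a b GU = GU" | "swv a b GV = GV" | "swv a b (GX i x) = GX i (sw a b x)"

lemma swv_swv[simp]: "swv a b (swv a b v) = v"
  by (cases v) (auto simp: sw_def)

lemma swv_pvert: "swv a b (pvert l i x) = pvert l i (sw a b x)"
  by (simp add: pvert_def)

lemma sw_range: "1 \<le> a \<Longrightarrow> a \<le> k \<Longrightarrow> 1 \<le> b \<Longrightarrow> b \<le> k \<Longrightarrow> 1 \<le> x \<Longrightarrow> x \<le> k \<Longrightarrow>
   1 \<le> sw a b x \<and> sw a b x \<le> k"
  by (simp add: sw_def)

lemma swv_adj:
  assumes ab: "1 \<le> a" "a \<le> k" "1 \<le> b" "b \<le> k" and h: "G_adj l k x y"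
  shows "G_adj l k (swv a b x) (swv a b y)"
proof -
  have img: "{swv a b x, swv a b y} = swv a b ` {x, y}" by simp
  from h consider "{x,y} = {GU,GV}" |
    i r where "i < l" "1 \<le> r" "r \<le> k" "{x,y} = {pvert l i r, pvert l (Suc i) r}"
    unfolding adj_iff by blast
  then show ?thesis
  proof cases
    case 1
    then have "{swv a b x, swv a b y} = {GU, GV}" unfolding img by simp
    then show ?thesis unfolding adj_iff by blast
  next
    case 2
    then have "{swv a b x, swv a b y} = {pvert l i (sw a b r), pvert l (Suc i) (sw a b r)}"
      unfolding img by (simp add: swv_pvert)
    moreover have "1 \<le> sw a b r \<and> sw a b r \<le> k" using sw_range ab 2 by blast
    ultimately show ?thesis unfolding adj_iff using 2 by blast
  qed
qed

lemma swv_aut: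
  assumes ab: "1 \<le> a" "a \<le> k" "1 \<le> b" "b \<le> k"
  shows "G_aut l k (swv a b)"
proof -
  let ?V = "G_verts l k"
  have sub: "swv a b v \<in> ?V" if "v \<in> ?V" for v
  proof -
    from that obtain i r where "v = pvert l i r" "i \<le> l" "1 \<le> r" "r \<le> k"
      unfolding G_verts_def by blast
    then show ?thesis using swv_pvert[of a b l i r] sw_range[OF ab, of r] pvert_in by metis
  qed
  have inj: "inj_on (swv a b) ?V"
    by (rule inj_onI) (metis swv_swv)
  have "swv a b ` ?V = ?V"
  proof
    show "swv a b ` ?V \<subseteq> ?V" using sub by blast
    show "?V \<subseteq> swv a b ` ?V"
    proof
      fix v assume "v \<in> ?V"
      then show "v \<in> swv a b ` ?V" using sub[of v] by (metis image_eqI swv_swv)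
    qed
  qed
  then have bij: "bij_betw (swv a b) ?V ?V" using inj by (simp add: bij_betw_def)
  have "G_adj l k x y \<longleftrightarrow> G_adj l k (swv a b x) (swv a b y)" for x y
    using swv_adj[OF ab, of l x y] swv_adj[OF ab, of l "swv a b x" "swv a b y"] by auto
  then show ?thesis using bij unfolding G_aut_def by blast
qed

lemma id_aut: "G_aut l k id"
  by (simp add: G_aut_def)

lemma sim_eq:
  assumes l: "1 \<le> l" and k: "2 \<le> k"
  shows "sim_u l k = {(GV, GV)} \<union>
     {(GX i r, GX i s) | i r s. 1 \<le> i \<and> i < l \<and> 1 \<le> r \<and> r \<le> k \<and> 1 \<le> s \<and> s \<le> k}"
    (is "_ = ?R")
proof
  let ?V = "G_verts l k"
  have V: "?V = {GU, GV} \<union> {GX i r | i r. 1 \<le> i \<and> i < l \<and> 1 \<le> r \<and> r \<le> k}"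
    using verts_eq l k by simp
  show "sim_u l k \<subseteq> ?R"
  proof
    fix p assume "p \<in> sim_u l k"
    then obtain x y \<pi> where p: "p = (x, y)" "x \<in> ?V - {GU}" "G_aut l k \<pi>" "\<pi> GU = GU" "\<pi> x = y"
      unfolding sim_u_def by blast
    from p(2) V consider "x = GV" | i r where "x = GX i r" "1 \<le> i" "i < l" "1 \<le> r" "r \<le> k"
      by blast
    then show "p \<in> ?R"
    proof cases
      case 1
      then show ?thesis using p aut_GV[OF p(3) p(4) l k] by simp
    next
      case 2
      then obtain r' where "1 \<le> r'" "r' \<le> k" "\<pi> (GX i r) = GX i r'"
        using aut_level[OF p(3) p(4) l k, of i r] by blast
      then show ?thesis using p 2 by blast
    qed
  qed
  show "?R \<subseteq> sim_u l k"
  proof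
    fix p assume "p \<in> ?R"
    then consider "p = (GV, GV)" | i r s where "p = (GX i r, GX i s)" "1 \<le> i" "i < l"
      "1 \<le> r" "r \<le> k" "1 \<le> s" "s \<le> k" by blast
    then show "p \<in> sim_u l k"
    proof cases
      case 1
      then show ?thesis unfolding sim_u_def using V id_aut[of l k] by auto
    next
      case 2
      have "swv r s (GX i r) = GX i s" by (simp add: sw_def)
      moreover have "G_aut l k (swv r s)" using swv_aut 2 by blast
      moreover have "GX i r \<in> ?V" "GX i s \<in> ?V" using V 2 by auto
      ultimately show ?thesis unfolding sim_u_def using 2 by force
    qed
  qed
qed

theorem proposition16:
  fixes l k :: nat
  assumes "1 \<le> l" and "2 \<le> k"
  shows "equiv (G_verts l k - {GU}) (sim_u l k) \<and>
    (G_verts l k - {GU}) // sim_u l k =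
      {{GX i r | r. 1 \<le> r \<and> r \<le> k} | i. 1 \<le> i \<and> i \<le> l - 1} \<union> {{GV}}"
proof -
  let ?R = "{(GV, GV)} \<union>
     {(GX i r, GX i s) | i r s. 1 \<le> i \<and> i < l \<and> 1 \<le> r \<and> r \<le> k \<and> 1 \<le> s \<and> s \<le> k}"
  have V: "G_verts l k - {GU} = {GV} \<union> {GX i r | i r. 1 \<le> i \<and> i < l \<and> 1 \<le> r \<and> r \<le> k}"
    using verts_eq assms by auto
  have S: "sim_u l k = ?R" using sim_eq assms by blast
  have eq: "equiv (G_verts l k - {GU}) ?R"
    unfolding V equiv_def refl_on_def sym_def trans_def by auto
  have c1: "?R `` {GV} = {GV}" by auto
  have c2: "?R `` {GX i r} = {GX i s | s. 1 \<le> s \<and> s \<le> k}"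
    if "1 \<le> i" "i < l" "1 \<le> r" "r \<le> k" for i r using that by auto
  have "(G_verts l k - {GU}) // ?R =
      {{GX i r | r. 1 \<le> r \<and> r \<le> k} | i. 1 \<le> i \<and> i \<le> l - 1} \<union> {{GV}}"
  proof
    show "(G_verts l k - {GU}) // ?R \<subseteq> {{GX i r | r. 1 \<le> r \<and> r \<le> k} | i. 1 \<le> i \<and> i \<le> l - 1} \<union> {{GV}}"
    proof
      fix C assume "C \<in> (G_verts l k - {GU}) // ?R"
      then obtain x where x: "x \<in> G_verts l k - {GU}" "C = ?R `` {x}" unfolding quotient_def by blast
      from x(1) V consider "x = GV" | i r where "x = GX i r" "1 \<le> i" "i < l" "1 \<le> r" "r \<le> k"
        by blast
      then show "C \<in> {{GX i r | r. 1 \<le> r \<and> r \<le> k} | i. 1 \<le> i \<and> i \<le> l - 1} \<union> {{GV}}"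
      proof cases
        case 1 then show ?thesis using x c1 by simp
      next
        case 2 then have "C = {GX i s | s. 1 \<le> s \<and> s \<le> k}" using x c2 by simp
        then show ?thesis using 2 by auto
      qed
    qed
    show "{{GX i r | r. 1 \<le> r \<and> r \<le> k} | i. 1 \<le> i \<and> i \<le> l - 1} \<union> {{GV}} \<subseteq> (G_verts l k - {GU}) // ?R"
    proof
      fix C assume "C \<in> {{GX i r | r. 1 \<le> r \<and> r \<le> k} | i. 1 \<le> i \<and> i \<le> l - 1} \<union> {{GV}}"
      then consider "C = {GV}" | i where "C = {GX i r | r. 1 \<le> r \<and> r \<le> k}" "1 \<le> i" "i \<le> l - 1"
        by blast
      then show "C \<in> (G_verts l k - {GU}) // ?R"
      proof cases
        case 1
        have "GV \<in> G_verts l k - {GU}" using V by auto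
        then show ?thesis using 1 c1 unfolding quotient_def by blast
      next
        case 2
        have il: "i < l" using 2 assms by simp
        have "GX i 1 \<in> G_verts l k - {GU}" using V il 2 assms by auto
        moreover have "C = ?R `` {GX i 1}" using c2[of i 1] 2 il assms by simp
        ultimately show ?thesis unfolding quotient_def by blast
      qed
    qed
  qed
  then show ?thesis using eq S by simp
qed

end
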